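(* Let $k\geq 3$ and let $G$ be the cubic graph on $n=6k$ vertices $a_j,b_j,c_j,d_j,e_j,f_j$ ($j=1,\dots,k$) with edges $a_jb_j,\ a_jc_j,\ b_jd_j,\ b_je_j,\ c_jd_j,\ c_je_j,\ d_jf_j,\ e_jf_j$ for each $j$, and $f_ja_{j+1}$ for each $j$ (indices modulo $k$, so $f_k a_1$ is an edge). Then $Z(G)=M(G)=n/3+2$.
   Context: For a graph $G$ on vertices $w_1,\dots,w_n$, $S(G)$ is the set of real symmetric $n\times n$ matrices $A$ such that for $s\neq t$, $a_{st}\neq 0$ if and only if $w_s$ and $w_t$ are adjacent (diagonal entries arbitrary); the maximum nullity $M(G)$ is the maximum nullity of a matrix in $S(G)$. Zero forcing: color each vertex black or white; if a black vertex has exactly one white neighbor, that neighbor is recolored black. A set $Z$ is a zero forcing set if starting with exactly $Z$ black and applying this rule repeatedly makes all vertices black; $Z(G)$ is the minimum size of a zero forcing set. *)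

theory Defs
  imports "Jordan_Normal_Form.Matrix_Kernel"
begin

text \<open>Graphs are given on the vertex set {0..<n} by a (symmetric, irreflexive)
adjacency relation adj :: nat => nat => bool.\<close>

definition S_graph :: "nat \<Rightarrow> (nat \<Rightarrow> nat \<Rightarrow> bool) \<Rightarrow> real mat set" where
  "S_graph n adj = {A. A \<in> carrier_mat n n \<and> A\<^sup>T = A \<and>
      (\<forall>s<n. \<forall>t<n. s \<noteq> t \<longrightarrow> (A $$ (s, t) \<noteq> 0 \<longleftrightarrow> adj s t))}"

definition max_nullity :: "nat \<Rightarrow> (nat \<Rightarrow> nat \<Rightarrow> bool) \<Rightarrow> nat" where
  "max_nullity n adj = Max (kernel_dim ` S_graph n adj)"

inductive_set zf_closure :: "nat \<Rightarrow> (nat \<Rightarrow> nat \<Rightarrow> bool) \<Rightarrow> nat set \<Rightarrow> nat set"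
  for n adj Z where
  init: "z \<in> Z \<Longrightarrow> z < n \<Longrightarrow> z \<in> zf_closure n adj Z"
| force: "u \<in> zf_closure n adj Z \<Longrightarrow> w < n \<Longrightarrow> adj u w \<Longrightarrow>
          (\<forall>v<n. adj u v \<and> v \<noteq> w \<longrightarrow> v \<in> zf_closure n adj Z) \<Longrightarrow>
          w \<in> zf_closure n adj Z"

definition zero_forcing_set :: "nat \<Rightarrow> (nat \<Rightarrow> nat \<Rightarrow> bool) \<Rightarrow> nat set \<Rightarrow> bool" where
  "zero_forcing_set n adj Z \<longleftrightarrow> Z \<subseteq> {..<n} \<and> zf_closure n adj Z = {..<n}"

definition zero_forcing_number :: "nat \<Rightarrow> (nat \<Rightarrow> nat \<Rightarrow> bool) \<Rightarrow> nat" where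
  "zero_forcing_number n adj = Min (card ` {Z. zero_forcing_set n adj Z})"

text \<open>The cubic graph of the theorem. Vertex 6*j + t (j < k, t < 6) stands for
a_{j+1}, b_{j+1}, c_{j+1}, d_{j+1}, e_{j+1}, f_{j+1} for t = 0,1,2,3,4,5.\<close>
definition gadget_edge :: "nat \<Rightarrow> nat \<Rightarrow> bool" where
  "gadget_edge s t \<longleftrightarrow> (s, t) \<in> {(0,1), (0,2), (1,3), (1,4), (2,3), (2,4), (3,5), (4,5)}"

definition G_adj_dir :: "nat \<Rightarrow> nat \<Rightarrow> nat \<Rightarrow> bool" where
  "G_adj_dir k u v \<longleftrightarrow>
     u < 6 * k \<and> v < 6 * k \<and>
     ((u div 6 = v div 6 \<and> gadget_edge (u mod 6) (v mod 6)) \<or>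
      (u mod 6 = 5 \<and> v mod 6 = 0 \<and> v div 6 = (u div 6 + 1) mod k))"

definition G_adj :: "nat \<Rightarrow> nat \<Rightarrow> nat \<Rightarrow> bool" where
  "G_adj k u v \<longleftrightarrow> G_adj_dir k u v \<or> G_adj_dir k v u"

end

theory Submission
  imports Defs "Jordan_Normal_Form.DL_Rank"
begin


lemma (in kernel) Ker_fin_dim: "Ker.fin_dim"
proof -
  obtain C where gj: "gauss_jordan_single A = C" by simp
  note g = gauss_jordan_single[OF A gj]
  have ker: "mat_kernel C = mat_kernel A" using g(1,2) A by (auto simp: mat_kernel_def)
  interpret KC: kernel nr nc C by unfold_locales (rule g(2))
  from find_base_vectors(3)[OF g(3) g(2)] have b: "KC.basis (set (find_base_vectors C))" .
  have "KC.VK = VK" using ker by simp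
  then have "basis (set (find_base_vectors C))" using b by simp
  then show ?thesis unfolding Ker.fin_dim_def Ker.basis_def by blast
qed

lemma (in kernel) proj_linear:
  assumes ps: "set ps \<subseteq> {..<nc}"
  shows "linear_map class_ring VK (module_vec TYPE('a) (length ps)) (\<lambda>x. vec (length ps) (\<lambda>i. x $ (ps ! i)))"
proof -
  interpret W: vec_space "TYPE('a)" "length ps" .
  have ps': "\<And>i. i < length ps \<Longrightarrow> ps ! i < nc" using ps nth_mem by blast
  show ?thesis
    apply (intro linear_map.intro mod_hom.intro mod_hom_axioms.intro)
    apply (rule Ker.vectorspace_axioms)
      apply (rule W.vectorspace_axioms)
     apply (rule Ker.module_axioms)
     apply (rule W.module_axioms)
    unfolding LinearCombinations.module_hom_def using ps' mat_kernel[OF A]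
    by (auto simp: class_ring_simps module_vec_simps)
qed

lemma (in kernel) dim_le_pivots:
  assumes ps: "set ps \<subseteq> {..<nc}"
    and inj: "\<And>x. x \<in> mat_kernel A \<Longrightarrow> (\<forall>i\<in>set ps. x $ i = 0) \<Longrightarrow> x = 0\<^sub>v nc"
  shows "dim \<le> length ps"
proof -
  define T where "T = (\<lambda>x::'a vec. vec (length ps) (\<lambda>i. x $ (ps ! i)))"
  interpret W: vec_space "TYPE('a)" "length ps" .
  interpret L: linear_map class_ring VK W.V T unfolding T_def by (rule proj_linear[OF ps])
  have ps': "\<And>i. i < length ps \<Longrightarrow> ps ! i < nc" using ps nth_mem by blast
  have injT: "inj_on T (carrier VK)"
  proof (rule inj_onI)
    fix x y assume x: "x \<in> carrier VK" and y: "y \<in> carrier VK" and e: "T x = T y"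
    have xc: "x \<in> carrier_vec nc" "y \<in> carrier_vec nc" using x y mat_kernel[OF A] by auto
    have xy: "x - y \<in> mat_kernel A" using x y xc A
      by (intro mat_kernelI[OF A]) (auto simp: mat_kernel_def mult_minus_distrib_mat_vec)
    have "\<forall>i\<in>set ps. (x - y) $ i = 0"
    proof
      fix i assume "i \<in> set ps"
      then obtain j where j: "j < length ps" "i = ps ! j" by (auto simp: in_set_conv_nth)
      have "T x $ j = T y $ j" using e by simp
      then show "(x - y) $ i = 0" using j xc ps'[OF j(1)] by (simp add: T_def)
    qed
    then have "x - y = 0\<^sub>v nc" using inj[OF xy] by simp
    note d = this
    show "x = y"
    proof (rule eq_vecI)
      fix i assume i: "i < dim_vec y"
      then have "(x - y) $ i = 0" using d xc by simp
      then show "x $ i = y $ i" using xc i by simp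
    next
      show "dim_vec x = dim_vec y" using xc by simp
    qed
  qed
  interpret im: vectorspace class_ring "W.vs L.imT" using L.imT_is_subspace W.subspace_is_vs by blast
  interpret L2: linear_map class_ring VK "W.vs L.imT" T
    apply (intro linear_map.intro mod_hom.intro mod_hom_axioms.intro)
    apply (rule Ker.vectorspace_axioms)
      apply (rule im.vectorspace_axioms)
     apply (rule Ker.module_axioms)
     apply (rule im.module_axioms)
    using L.T_hom unfolding LinearCombinations.module_hom_def mod_hom.im_def[OF L.mod_hom_axioms]
    by auto
  have surj: "T ` carrier VK = carrier (W.vs L.imT)"
    unfolding mod_hom.im_def[OF L.mod_hom_axioms] by simp
  have "dim = im.dim" by (rule L2.dim_eq[OF Ker_fin_dim injT surj])
  also have "\<dots> \<le> W.dim"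
    by (rule W.subspace_dim[OF L.imT_is_subspace W.fin_dim L2.surj_fin_dim[OF Ker_fin_dim surj]])
  also have "\<dots> = length ps" by (rule W.dim_is_n)
  finally show ?thesis .
qed

lemma (in kernel) dim_ge_pivots:
  assumes ps: "set ps \<subseteq> {..<nc}"
    and wit: "\<And>i. i < length ps \<Longrightarrow> \<exists>w\<in>mat_kernel A. \<forall>i'<length ps. w $ (ps ! i') = (if i' = i then 1 else 0)"
  shows "length ps \<le> dim"
proof -
  define T where "T = (\<lambda>x::'a vec. vec (length ps) (\<lambda>i. x $ (ps ! i)))"
  interpret W: vec_space "TYPE('a)" "length ps" .
  interpret L: linear_map class_ring VK W.V T unfolding T_def by (rule proj_linear[OF ps])
  have im: "L.imT = carrier_vec (length ps)"
  proof
    show "L.imT \<subseteq> carrier_vec (length ps)"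
      unfolding mod_hom.im_def[OF L.mod_hom_axioms] by (auto simp: T_def)
    have "set (unit_vecs (length ps)) \<subseteq> L.imT"
    proof
      fix u :: "'a vec" assume "u \<in> set (unit_vecs (length ps))"
      then obtain i where i: "i < length ps" "u = unit_vec (length ps) i" by (auto simp: unit_vecs_def)
      obtain w where w: "w \<in> mat_kernel A" "\<forall>i'<length ps. w $ (ps ! i') = (if i' = i then 1 else 0)"
        using wit[OF i(1)] by blast
      have "T w = u" unfolding i(2) T_def
      proof (rule eq_vecI)
        fix j assume j: "j < dim_vec (unit_vec (length ps) i :: 'a vec)"
        then have "j < length ps" by simp
        then show "vec (length ps) (\<lambda>i. w $ (ps ! i)) $ j = unit_vec (length ps) i $ j"
          using w(2) i(1) by (simp add: unit_vec_def)
      qed simp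
      moreover have "w \<in> carrier VK" using w(1) by simp
      ultimately show "u \<in> L.imT" unfolding mod_hom.im_def[OF L.mod_hom_axioms] by (metis image_eqI)
    qed
    then have "W.span (set (unit_vecs (length ps))) \<subseteq> L.imT"
      by (rule W.span_is_subset[OF _ subspace.submod[OF L.imT_is_subspace]])
    then show "carrier_vec (length ps) \<subseteq> L.imT" using W.span_unit_vecs_is_carrier by simp
  qed
  have "vectorspace.dim class_ring (W.vs L.imT) + vectorspace.dim class_ring (Ker.vs L.kerT) = dim"
    by (rule L.rank_nullity[OF Ker_fin_dim])
  moreover have "vectorspace.dim class_ring (W.vs L.imT) = length ps"
  proof -
    have eq: "W.vs (carrier_vec (length ps)) = W.V" by (simp add: module_vec_def)
    show ?thesis unfolding im eq by (rule W.dim_is_n)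
  qed
  ultimately show ?thesis by (metis le_add1)
qed

lemma (in kernel) dim_ge_set:
  assumes P: "finite P" "P \<subseteq> {..<nc}"
    and wit: "\<And>p. p \<in> P \<Longrightarrow> \<exists>w\<in>mat_kernel A. \<forall>p'\<in>P. w $ p' = (if p' = p then 1 else 0)"
  shows "card P \<le> dim"
proof -
  define ps where "ps = sorted_list_of_set P"
  have sps: "set ps = P" "distinct ps" "length ps = card P" using P unfolding ps_def by auto
  have "length ps \<le> dim"
  proof (rule dim_ge_pivots)
    show "set ps \<subseteq> {..<nc}" using sps P by simp
    fix i assume i: "i < length ps"
    then have "ps ! i \<in> P" using sps nth_mem by blast
    then obtain w where w: "w \<in> mat_kernel A" "\<forall>p'\<in>P. w $ p' = (if p' = ps ! i then 1 else 0)"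
      using wit by blast
    show "\<exists>w\<in>mat_kernel A. \<forall>i'<length ps. w $ (ps ! i') = (if i' = i then 1 else 0)"
    proof (intro bexI[OF _ w(1)] allI impI)
      fix i' assume i': "i' < length ps"
      then have "ps ! i' \<in> P" using sps nth_mem by blast
      then show "w $ (ps ! i') = (if i' = i then 1 else 0)"
        using w(2) nth_eq_iff_index_eq[OF sps(2) i' i] by simp
    qed
  qed
  then show ?thesis using sps by simp
qed

lemma (in kernel) dim_le_set:
  assumes P: "finite P" "P \<subseteq> {..<nc}"
    and inj: "\<And>x. x \<in> mat_kernel A \<Longrightarrow> (\<forall>i\<in>P. x $ i = 0) \<Longrightarrow> x = 0\<^sub>v nc"
  shows "dim \<le> card P"
proof -
  define ps where "ps = sorted_list_of_set P"
  have sps: "set ps = P" "distinct ps" "length ps = card P" using P unfolding ps_def by auto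
  have "dim \<le> length ps" by (rule dim_le_pivots) (use sps P inj in auto)
  then show ?thesis using sps by simp
qed



definition succk :: "nat \<Rightarrow> nat \<Rightarrow> nat" where "succk k j = (if Suc j = k then 0 else Suc j)"
definition predk :: "nat \<Rightarrow> nat \<Rightarrow> nat" where "predk k j = (if j = 0 then k - 1 else j - 1)"

lemma mod_succ: "j < k \<Longrightarrow> (j + 1) mod k = succk k j"
  unfolding succk_def by (auto simp: mod_if)

lemma adj_coord:
  assumes t: "t < 6" and r: "r < 6"
  shows "G_adj k (6*j+t) (6*q+r) \<longleftrightarrow> j < k \<and> q < k \<and>
     ((j = q \<and> (gadget_edge t r \<or> gadget_edge r t)) \<or> (t = 5 \<and> r = 0 \<and> q = succk k j) \<or>
      (t = 0 \<and> r = 5 \<and> j = succk k q))"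
proof -
  have d: "(6*j+t) div 6 = j" "(6*j+t) mod 6 = t" "(6*q+r) div 6 = q" "(6*q+r) mod 6 = r"
    using t r by auto
  have l: "6*j+t < 6*k \<longleftrightarrow> j < k" "6*q+r < 6*k \<longleftrightarrow> q < k" using t r by auto
  show ?thesis unfolding G_adj_def G_adj_dir_def d l
    using mod_succ[of j k] mod_succ[of q k] by auto
qed

lemma succ_pred: "j < k \<Longrightarrow> q < k \<Longrightarrow> (j = succk k q) \<longleftrightarrow> (q = predk k j)"
  unfolding succk_def predk_def by auto

lemma succ_lt: "j < k \<Longrightarrow> succk k j < k" unfolding succk_def by auto
lemma pred_lt: "j < k \<Longrightarrow> predk k j < k" unfolding predk_def by auto

lemma decomp: fixes l :: nat obtains q r where "l = 6*q + r" "r < (6::nat)"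
proof
  show "l = 6*(l div 6) + l mod 6" by simp
qed simp

lemma r6: "(r::nat) < 6 \<Longrightarrow> r = 0 \<or> r = 1 \<or> r = 2 \<or> r = 3 \<or> r = 4 \<or> r = 5" by auto

lemma eq6: assumes "r < 6" "s < 6" shows "(6*q+r = 6*p+(s::nat)) \<longleftrightarrow> q = p \<and> r = s"
proof
  assume h: "6*q+r = 6*p+s"
  have "(6*q+r) div 6 = (6*p+s) div 6" "(6*q+r) mod 6 = (6*p+s) mod 6" using h by simp_all
  then show "q = p \<and> r = s" using assms by simp
qed simp
lemma eq6': assumes "r < 6" shows "(6*q+r = 6*(p::nat)) \<longleftrightarrow> q = p \<and> r = 0"
  using eq6[OF assms, of 0 q p] by simp

lemma nb_gen:
  assumes "\<And>q r. r < 6 \<Longrightarrow> (q < k \<and> G_adj k i (6*q+r)) \<longleftrightarrow> 6*q+r \<in> N"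
  shows "{l. l < 6*k \<and> G_adj k i l} = N"
proof (rule Set.set_eqI)
  fix l :: nat obtain q r where l: "l = 6*q+r" "r<6" by (rule decomp)
  have "l < 6*k \<longleftrightarrow> q < k" unfolding l(1) using l(2) by linarith
  then show "l \<in> {l. l < 6*k \<and> G_adj k i l} \<longleftrightarrow> l \<in> N" using assms[OF l(2)] l by auto
qed

lemma nb0: assumes "j < k" shows "{l. l < 6*k \<and> G_adj k (6*j) l} = {6*j+1, 6*j+2, 6*predk k j+5}"
proof (rule nb_gen)
  fix q r :: nat assume r: "r < 6"
  have a: "G_adj k (6*j) (6*q+r) \<longleftrightarrow> j < k \<and> q < k \<and>
     ((j = q \<and> (gadget_edge 0 r \<or> gadget_edge r 0)) \<or> (0 = (5::nat) \<and> r = 0 \<and> q = succk k j) \<or>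
      (r = 5 \<and> j = succk k q))" using adj_coord[of 0 r k j q] r by simp
  have g: "gadget_edge 0 r \<or> gadget_edge r 0 \<longleftrightarrow> r = 1 \<or> r = 2" by (auto simp: gadget_edge_def)
  have p: "q < k \<Longrightarrow> j = succk k q \<longleftrightarrow> q = predk k j" using succ_pred[of j k q] assms by simp
  have m: "6*q+r \<in> {6*j+1, 6*j+2, 6*predk k j+5} \<longleftrightarrow> (q = j \<and> (r = 1 \<or> r = 2)) \<or> (q = predk k j \<and> r = 5)"
    using r eq6[of r 1 q j] eq6[of r 2 q j] eq6[of r 5 q "predk k j"] by auto
  show "(q < k \<and> G_adj k (6*j) (6*q+r)) \<longleftrightarrow> 6*q+r \<in> {6*j+1, 6*j+2, 6*predk k j+5}"
    unfolding a g m using p assms pred_lt[OF assms] by auto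
qed

lemma nb5: assumes "j < k" shows "{l. l < 6*k \<and> G_adj k (6*j+5) l} = {6*j+3, 6*j+4, 6*succk k j}"
proof (rule nb_gen)
  fix q r :: nat assume r: "r < 6"
  have a: "G_adj k (6*j+5) (6*q+r) \<longleftrightarrow> j < k \<and> q < k \<and>
     ((j = q \<and> (gadget_edge 5 r \<or> gadget_edge r 5)) \<or> (r = 0 \<and> q = succk k j))" using adj_coord[of 5 r k j q] r by simp
  have g: "gadget_edge 5 r \<or> gadget_edge r 5 \<longleftrightarrow> r = 3 \<or> r = 4" by (auto simp: gadget_edge_def)
  have m: "6*q+r \<in> {6*j+3, 6*j+4, 6*succk k j} \<longleftrightarrow> (q = j \<and> (r = 3 \<or> r = 4)) \<or> (q = succk k j \<and> r = 0)"
    using r eq6[of r 3 q j] eq6[of r 4 q j] eq6'[of r q "succk k j"] by auto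
  show "(q < k \<and> G_adj k (6*j+5) (6*q+r)) \<longleftrightarrow> 6*q+r \<in> {6*j+3, 6*j+4, 6*succk k j}"
    unfolding a g m using assms succ_lt[OF assms] by auto
qed

lemma nb1: assumes "j < k" "t = 1 \<or> t = 2" shows "{l. l < 6*k \<and> G_adj k (6*j+t) l} = {6*j, 6*j+3, 6*j+4}"
proof (rule nb_gen)
  fix q r :: nat assume r: "r < 6"
  have a: "G_adj k (6*j+t) (6*q+r) \<longleftrightarrow> j < k \<and> q < k \<and>
     ((j = q \<and> (gadget_edge t r \<or> gadget_edge r t)))" using adj_coord[of t r k j q] r assms(2) by auto
  have g: "gadget_edge t r \<or> gadget_edge r t \<longleftrightarrow> r = 0 \<or> r = 3 \<or> r = 4" using assms(2) by (auto simp: gadget_edge_def)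
  have m: "6*q+r \<in> {6*j, 6*j+3, 6*j+4} \<longleftrightarrow> (q = j \<and> (r = 0 \<or> r = 3 \<or> r = 4))"
    using r eq6[of r 3 q j] eq6[of r 4 q j] eq6'[of r q j] by auto
  show "(q < k \<and> G_adj k (6*j+t) (6*q+r)) \<longleftrightarrow> 6*q+r \<in> {6*j, 6*j+3, 6*j+4}"
    unfolding a g m using assms by auto
qed

lemma nb3: assumes "j < k" "t = 3 \<or> t = 4" shows "{l. l < 6*k \<and> G_adj k (6*j+t) l} = {6*j+1, 6*j+2, 6*j+5}"
proof (rule nb_gen)
  fix q r :: nat assume r: "r < 6"
  have a: "G_adj k (6*j+t) (6*q+r) \<longleftrightarrow> j < k \<and> q < k \<and>
     ((j = q \<and> (gadget_edge t r \<or> gadget_edge r t)))" using adj_coord[of t r k j q] r assms(2) by auto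
  have g: "gadget_edge t r \<or> gadget_edge r t \<longleftrightarrow> r = 1 \<or> r = 2 \<or> r = 5" using assms(2) by (auto simp: gadget_edge_def)
  have m: "6*q+r \<in> {6*j+1, 6*j+2, 6*j+5} \<longleftrightarrow> (q = j \<and> (r = 1 \<or> r = 2 \<or> r = 5))"
    using r eq6[of r 1 q j] eq6[of r 2 q j] eq6[of r 5 q j] by auto
  show "(q < k \<and> G_adj k (6*j+t) (6*q+r)) \<longleftrightarrow> 6*q+r \<in> {6*j+1, 6*j+2, 6*j+5}"
    unfolding a g m using assms by auto
qed

lemma zf_lt: "v \<in> zf_closure n adj Z \<Longrightarrow> v < n"
  by (induction rule: zf_closure.induct) auto

lemma force_nbr:
  assumes u: "u \<in> zf_closure n adj Z" and S: "{l. l < n \<and> adj u l} = S" and w: "w \<in> S"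
    and rest: "\<forall>v\<in>S-{w}. v \<in> zf_closure n adj Z"
  shows "w \<in> zf_closure n adj Z"
proof (rule zf_closure.force[OF u])
  show "w < n" "adj u w" using w S by auto
  show "\<forall>v<n. adj u v \<and> v \<noteq> w \<longrightarrow> v \<in> zf_closure n adj Z" using rest S by auto
qed

definition Z0 :: "nat \<Rightarrow> nat set" where
  "Z0 k = {0, 5} \<union> (\<lambda>j. 6*j+1) ` {..<k} \<union> (\<lambda>j. 6*j+3) ` {..<k}"

lemma Z0_all:
  assumes k: "k \<ge> 1"
  shows "j < k \<Longrightarrow> 6*j \<in> zf_closure (6*k) (G_adj k) (Z0 k) \<and> 6*j+1 \<in> zf_closure (6*k) (G_adj k) (Z0 k) \<and>
     6*j+2 \<in> zf_closure (6*k) (G_adj k) (Z0 k) \<and> 6*j+3 \<in> zf_closure (6*k) (G_adj k) (Z0 k) \<and>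
     6*j+4 \<in> zf_closure (6*k) (G_adj k) (Z0 k) \<and> 6*j+5 \<in> zf_closure (6*k) (G_adj k) (Z0 k)"
proof (induction j)
  case 0
  let ?C = "zf_closure (6*k) (G_adj k) (Z0 k)"
  have c0: "0 \<in> ?C" "1 \<in> ?C" "3 \<in> ?C" "5 \<in> ?C" using k
    by (auto intro!: zf_closure.init simp: Z0_def image_iff)
  have n1: "{l. l < 6*k \<and> G_adj k 1 l} = {0,3,4}" using nb1[of 0 k 1] k by (simp add: eval_nat_numeral)
  have n3: "{l. l < 6*k \<and> G_adj k 3 l} = {1,2,5}" using nb3[of 0 k 3] k by (simp add: eval_nat_numeral)
  have c4: "4 \<in> ?C"
    by (rule force_nbr[OF c0(2) n1]) (use c0 k in auto)
  have c2: "2 \<in> ?C"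
    by (rule force_nbr[OF c0(3) n3]) (use c0 k in auto)
  show ?case using c0 c2 c4 by (simp add: eval_nat_numeral)
next
  case (Suc j)
  let ?C = "zf_closure (6*k) (G_adj k) (Z0 k)"
  have jk: "j < k" using Suc.prems by simp
  note IH = Suc.IH[OF jk]
  have sj: "succk k j = Suc j" using Suc.prems unfolding succk_def by simp
  have pj: "predk k (Suc j) = j" unfolding predk_def by simp
  have a: "6 * Suc j \<in> ?C"
  proof -
    have u5: "6*j+5 \<in> ?C" using IH by simp
    show ?thesis by (rule force_nbr[OF u5 nb5[OF jk]]) (use IH sj in auto)
  qed
  have sk: "Suc j \<in> {..<k}" using Suc.prems by simp
  have "6 * Suc j + 1 \<in> (\<lambda>j. 6*j+1) ` {..<k}" "6 * Suc j + 3 \<in> (\<lambda>j. 6*j+3) ` {..<k}"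
    using imageI[OF sk, of "\<lambda>j. 6*j+1"] imageI[OF sk, of "\<lambda>j. 6*j+3"] by auto
  then have "6 * Suc j + 1 \<in> Z0 k" "6 * Suc j + 3 \<in> Z0 k" unfolding Z0_def by blast+
  then have b: "6 * Suc j + 1 \<in> ?C" "6 * Suc j + 3 \<in> ?C" using Suc.prems
    by (auto intro!: zf_closure.init)
  have e: "6 * Suc j + 4 \<in> ?C"
    by (rule force_nbr[OF b(1) nb1[OF Suc.prems, of 1]]) (use a b in auto)
  have c: "6 * Suc j + 2 \<in> ?C"
    by (rule force_nbr[OF a nb0[OF Suc.prems]]) (use a b IH pj in auto)
  have f: "6 * Suc j + 5 \<in> ?C"
    by (rule force_nbr[OF b(2) nb3[OF Suc.prems, of 3]]) (use b c in auto)
  show ?case using a b c e f by simp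
qed

lemma Z0_zfs: assumes k: "k \<ge> 1" shows "zero_forcing_set (6*k) (G_adj k) (Z0 k)"
  unfolding zero_forcing_set_def
proof
  show "Z0 k \<subseteq> {..<6*k}" using k by (auto simp: Z0_def)
  show "zf_closure (6*k) (G_adj k) (Z0 k) = {..<6*k}"
  proof
    show "zf_closure (6*k) (G_adj k) (Z0 k) \<subseteq> {..<6*k}" using zf_lt by blast
    show "{..<6*k} \<subseteq> zf_closure (6*k) (G_adj k) (Z0 k)"
    proof
      fix v assume "v \<in> {..<6*k}"
      then have v: "v < 6*k" by simp
      obtain q r where qr: "v = 6*q+r" "r < 6" by (rule decomp)
      have q: "q < k" using v qr by linarith
      show "v \<in> zf_closure (6*k) (G_adj k) (Z0 k)"
        using Z0_all[OF k q] r6[OF qr(2)] qr(1) by auto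
    qed
  qed
qed

lemma Z0_card: "card (Z0 k) = 2*k+2"
proof -
  have i1: "inj_on (\<lambda>j. 6*j+1) {..<k}" "inj_on (\<lambda>j::nat. 6*j+3) {..<k}" by (auto simp: inj_on_def)
  have d1: "(\<lambda>j. 6*j+1) ` {..<k} \<inter> (\<lambda>j::nat. 6*j+3) ` {..<k} = {}"
    using eq6[of 1 3] by auto
  have d2: "{0::nat, 5} \<inter> ((\<lambda>j. 6*j+1) ` {..<k} \<union> (\<lambda>j::nat. 6*j+3) ` {..<k}) = {}"
    using eq6[of 1 5 _ 0] eq6[of 3 5 _ 0] by auto
  have "card (Z0 k) = card {0::nat,5} + card ((\<lambda>j. 6*j+1) ` {..<k} \<union> (\<lambda>j::nat. 6*j+3) ` {..<k})"
    unfolding Z0_def Un_assoc by (rule card_Un_disjoint) (use d2 in auto)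
  also have "\<dots> = 2 + (k + k)"
    by (subst card_Un_disjoint) (use d1 i1 in \<open>auto simp: card_image\<close>)
  finally show ?thesis by simp
qed

lemma zf_vanish:
  assumes A: "A \<in> S_graph n adj" and x: "x \<in> mat_kernel A" and Z: "\<forall>z\<in>Z. x $ z = 0"
  shows "v \<in> zf_closure n adj Z \<Longrightarrow> x $ v = 0"
proof (induction rule: zf_closure.induct)
  case (init z) then show ?case using Z by simp
next
  case (force u w)
  have Ac: "A \<in> carrier_mat n n" and Aoff: "\<And>s t. s < n \<Longrightarrow> t < n \<Longrightarrow> s \<noteq> t \<Longrightarrow> A $$ (s,t) \<noteq> 0 \<longleftrightarrow> adj s t"
    using A unfolding S_graph_def by auto
  have xc: "x \<in> carrier_vec n" and Ax: "A *\<^sub>v x = 0\<^sub>v n" using mat_kernelD[OF Ac x] by auto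
  have un: "u < n" using force.hyps(1) zf_lt by blast
  show ?case
  proof (cases "w = u")
    case True then show ?thesis using force.IH by simp
  next
    case False
    have "0 = (A *\<^sub>v x) $ u" using Ax un by simp
    also have "\<dots> = (\<Sum>l\<in>{0..<n}. A $$ (u,l) * x $ l)"
      using Ac xc un by (simp add: mult_mat_vec_def scalar_prod_def)
    also have "\<dots> = A $$ (u,w) * x $ w"
    proof (rule sum.remove[of "{0..<n}" w, THEN trans])
      show "finite {0..<n}" by simp
      show "w \<in> {0..<n}" using force.hyps by simp
      have "(\<Sum>l\<in>{0..<n} - {w}. A $$ (u,l) * x $ l) = 0"
      proof (rule sum.neutral, rule ballI)
        fix l assume l: "l \<in> {0..<n} - {w}"
        show "A $$ (u,l) * x $ l = 0"
        proof (cases "l = u")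
          case True then show ?thesis using force.IH by simp
        next
          case lu: False
          show ?thesis
          proof (cases "adj u l")
            case True then show ?thesis using force.IH l by simp
          next
            case False then show ?thesis using Aoff[of u l] un l lu by simp
          qed
        qed
      qed
      then show "A $$ (u,w) * x $ w + (\<Sum>l\<in>{0..<n} - {w}. A $$ (u,l) * x $ l) = A $$ (u,w) * x $ w" by simp
    qed
    finally have "A $$ (u,w) * x $ w = 0" by simp
    moreover have "A $$ (u,w) \<noteq> 0" using Aoff[of u w] un force.hyps False by simp
    ultimately show ?thesis by simp
  qed
qed

lemma zf_bound:
  assumes AS: "A \<in> S_graph n adj" and Z: "zero_forcing_set n adj Z"
  shows "kernel_dim A \<le> card Z"
proof -
  have Ac: "A \<in> carrier_mat n n" using AS unfolding S_graph_def by auto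
  interpret kernel n n A by unfold_locales (rule Ac)
  have Zs: "Z \<subseteq> {..<n}" "zf_closure n adj Z = {..<n}" using Z unfolding zero_forcing_set_def by auto
  have "dim \<le> card Z"
  proof (rule dim_le_set)
    show "finite Z" using Zs finite_subset by blast
    show "Z \<subseteq> {..<n}" by (rule Zs(1))
    fix x assume x: "x \<in> mat_kernel A" and z: "\<forall>i\<in>Z. x $ i = 0"
    have xc: "x \<in> carrier_vec n" using mat_kernelD[OF Ac x] by auto
    show "x = 0\<^sub>v n"
    proof (rule eq_vecI)
      fix i assume "i < dim_vec (0\<^sub>v n :: real vec)"
      then have "i \<in> zf_closure n adj Z" using Zs by simp
      then show "x $ i = 0\<^sub>v n $ i" using zf_vanish[OF AS x z] \<open>i < _\<close> by simp
    qed (use xc in simp)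
  qed
  then show ?thesis using Ac by simp
qed

definition Aadj :: "nat \<Rightarrow> real mat" where
  "Aadj k = mat (6*k) (6*k) (\<lambda>(i,j). if G_adj k i j then 1 else 0)"

lemma Aadj_S: "Aadj k \<in> S_graph (6*k) (G_adj k)"
  unfolding S_graph_def Aadj_def
proof (intro CollectI conjI)
  show "mat (6*k) (6*k) (\<lambda>(i,j). if G_adj k i j then 1 else 0) \<in> carrier_mat (6*k) (6*k)" by simp
  show "(mat (6*k) (6*k) (\<lambda>(i,j). if G_adj k i j then 1 else 0))\<^sup>T = (mat (6*k) (6*k) (\<lambda>(i,j). if G_adj k i j then 1 else (0::real)))"
    by (rule eq_matI) (auto simp: G_adj_def)
qed auto

lemma Aadj_mult: "i < 6*k \<Longrightarrow> (Aadj k *\<^sub>v vec (6*k) f) $ i = (\<Sum>l\<in>{0..<6*k}. (if G_adj k i l then 1 else 0) * f l)"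
  unfolding Aadj_def by (simp add: mult_mat_vec_def scalar_prod_def)

lemma nbr_sum:
  fixes n :: nat
  assumes "{l. l < n \<and> P l} = {a,b,c}" "a \<noteq> b" "a \<noteq> c" "b \<noteq> c"
  shows "(\<Sum>l\<in>{0..<n}. (if P l then 1 else 0) * (f l :: real)) = f a + f b + f c"
proof -
  have "(\<Sum>l\<in>{0..<n}. (if P l then 1 else 0) * f l) = (\<Sum>l\<in>{0..<n}. if P l then f l else 0)"
    by (rule sum.cong) auto
  also have "\<dots> = sum f {l \<in> {0..<n}. P l}" by (rule sum.inter_filter[symmetric]) (rule finite_atLeastLessThan)
  also have "{l \<in> {0..<n}. P l} = {a,b,c}" using assms(1) by auto
  finally show ?thesis using assms(2-4) by simp
qed

lemma dm6[simp]: "r < 6 \<Longrightarrow> (6*q+r) div 6 = (q::nat)" "r < 6 \<Longrightarrow> (6*q+r) mod 6 = (r::nat)"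
  "(6*q) div 6 = (q::nat)" "(6*q) mod 6 = (0::nat)" by auto

lemma null_vec:
  assumes k: "k \<ge> 1"
    and c0: "\<And>j. j < k \<Longrightarrow> f(6*j+1) + f(6*j+2) + f(6*predk k j+5) = 0"
    and c1: "\<And>j. j < k \<Longrightarrow> f(6*j) + f(6*j+3) + f(6*j+4) = 0"
    and c3: "\<And>j. j < k \<Longrightarrow> f(6*j+1) + f(6*j+2) + f(6*j+5) = 0"
    and c5: "\<And>j. j < k \<Longrightarrow> f(6*j+3) + f(6*j+4) + f(6*succk k j) = 0"
  shows "vec (6*k) f \<in> mat_kernel (Aadj k)"
proof (rule mat_kernelI)
  show "Aadj k \<in> carrier_mat (6*k) (6*k)" by (simp add: Aadj_def)
  show "vec (6*k) f \<in> carrier_vec (6*k)" by simp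
  show "Aadj k *\<^sub>v vec (6*k) f = 0\<^sub>v (6*k)"
  proof (rule eq_vecI)
    fix i assume "i < dim_vec (0\<^sub>v (6*k) :: real vec)"
    then have i: "i < 6*k" by simp
    obtain j t where jt: "i = 6*j+t" "t < 6" by (rule decomp)
    have j: "j < k" using i jt by linarith
    have "(\<Sum>l\<in>{0..<6*k}. (if G_adj k i l then 1 else 0) * f l) = 0"
      using r6[OF jt(2)]
    proof (elim disjE)
      assume "t = 0"
      then show ?thesis using nbr_sum[OF nb0[OF j]] c0[OF j] jt(1) eq6[of 1 2 j j] eq6[of 1 5 j "predk k j"] eq6[of 2 5 j "predk k j"] by simp
    next
      assume "t = 1"
      then have tt: "t = 1 \<or> t = 2" by simp
      show ?thesis unfolding jt(1) using nbr_sum[OF nb1[OF j tt]] c1[OF j] eq6'[of 3 j j] eq6'[of 4 j j] by simp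
    next
      assume "t = 2"
      then have tt: "t = 1 \<or> t = 2" by simp
      show ?thesis unfolding jt(1) using nbr_sum[OF nb1[OF j tt]] c1[OF j] eq6'[of 3 j j] eq6'[of 4 j j] by simp
    next
      assume "t = 3"
      then have tt: "t = 3 \<or> t = 4" by simp
      show ?thesis unfolding jt(1) using nbr_sum[OF nb3[OF j tt]] c3[OF j] by simp
    next
      assume "t = 4"
      then have tt: "t = 3 \<or> t = 4" by simp
      show ?thesis unfolding jt(1) using nbr_sum[OF nb3[OF j tt]] c3[OF j] by simp
    next
      assume "t = 5"
      then show ?thesis using nbr_sum[OF nb5[OF j]] c5[OF j] jt(1) eq6'[of 3 j "succk k j"] eq6'[of 4 j "succk k j"] by simp
    qed
    then show "(Aadj k *\<^sub>v vec (6*k) f) $ i = 0\<^sub>v (6*k) $ i" using Aadj_mult[OF i] i by simp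
  qed (simp add: Aadj_def)
qed

definition F :: "(nat \<Rightarrow> nat \<Rightarrow> real) \<Rightarrow> nat \<Rightarrow> real" where
  "F g l = g (l div 6) (l mod 6)"

lemma F_vals: "F g (6*J) = g J 0" "F g (6*J+1) = g J 1" "F g (6*J+2) = g J 2" "F g (6*J+3) = g J 3"
  "F g (6*J+4) = g J 4" "F g (6*J+5) = g J 5" "F g 0 = g 0 0" "F g 5 = g 0 5"
  unfolding F_def
  using dm6(1,2)[of 1 J] dm6(1,2)[of 2 J] dm6(1,2)[of 3 J] dm6(1,2)[of 4 J] dm6(1,2)[of 5 J] by simp_all

lemma null_vec_g:
  assumes k: "k \<ge> 1"
    and c0: "\<And>j. j < k \<Longrightarrow> g j 1 + g j 2 + g (predk k j) 5 = 0"
    and c1: "\<And>j. j < k \<Longrightarrow> g j 0 + g j 3 + g j 4 = 0"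
    and c3: "\<And>j. j < k \<Longrightarrow> g j 1 + g j 2 + g j 5 = 0"
    and c5: "\<And>j. j < k \<Longrightarrow> g j 3 + g j 4 + g (succk k j) 0 = 0"
  shows "vec (6*k) (F g) \<in> mat_kernel (Aadj k)"
  by (rule null_vec[OF k]) (simp_all only: F_vals c0 c1 c3 c5)

definition gu :: "nat \<Rightarrow> nat \<Rightarrow> nat \<Rightarrow> real" where
  "gu J q r = (if q = J \<and> r = 1 then 1 else if q = J \<and> r = 2 then -1 else 0)"
definition gv :: "nat \<Rightarrow> nat \<Rightarrow> nat \<Rightarrow> real" where
  "gv J q r = (if q = J \<and> r = 3 then 1 else if q = J \<and> r = 4 then -1 else 0)"
definition gX :: "nat \<Rightarrow> nat \<Rightarrow> real" where
  "gX q r = (if r = 0 then 1 else if r = 4 then -1 else 0)"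
definition gY :: "nat \<Rightarrow> nat \<Rightarrow> real" where
  "gY q r = (if r = 5 then 1 else if r = 2 then -1 else 0)"

lemma uf_ker: "k \<ge> 1 \<Longrightarrow> vec (6*k) (F (gu J)) \<in> mat_kernel (Aadj k)"
  by (rule null_vec_g) (auto simp: gu_def)
lemma vf_ker: "k \<ge> 1 \<Longrightarrow> vec (6*k) (F (gv J)) \<in> mat_kernel (Aadj k)"
  by (rule null_vec_g) (auto simp: gv_def)
lemma Xf_ker: "k \<ge> 1 \<Longrightarrow> vec (6*k) (F gX) \<in> mat_kernel (Aadj k)"
  by (rule null_vec_g) (auto simp: gX_def)
lemma Yf_ker: "k \<ge> 1 \<Longrightarrow> vec (6*k) (F gY) \<in> mat_kernel (Aadj k)"
  by (rule null_vec_g) (auto simp: gY_def)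

lemma Z0_cases: "p \<in> Z0 k \<Longrightarrow> p = 0 \<or> p = 5 \<or> (\<exists>J<k. p = 6*J+1) \<or> (\<exists>J<k. p = 6*J+3)"
  unfolding Z0_def by auto

lemma Z0_F:
  assumes "p' \<in> Z0 k" "p' = 0 \<Longrightarrow> g 0 0 = (if p' = p then 1 else 0)" "p' = 5 \<Longrightarrow> g 0 5 = (if p' = p then 1 else 0)"
   "\<And>J. J < k \<Longrightarrow> p' = 6*J+1 \<Longrightarrow> g J 1 = (if p' = p then 1 else 0)"
   "\<And>J. J < k \<Longrightarrow> p' = 6*J+3 \<Longrightarrow> g J 3 = (if p' = p then 1 else 0)"
  shows "F g p' = (if p' = p then 1 else 0)"
  using Z0_cases[OF assms(1)] assms(2-5) F_vals by (elim disjE exE conjE) metis+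

lemma Z0_lt: "k \<ge> 1 \<Longrightarrow> p \<in> Z0 k \<Longrightarrow> p < 6*k"
  unfolding Z0_def by auto

lemma Z0_wit:
  assumes k: "k \<ge> 1" and p: "p \<in> Z0 k"
  shows "\<exists>w\<in>mat_kernel (Aadj k). \<forall>p'\<in>Z0 k. w $ p' = (if p' = p then 1 else 0)"
proof -
  have ev: "\<And>f p'. p' \<in> Z0 k \<Longrightarrow> vec (6*k) f $ p' = f p'" using Z0_lt[OF k] by simp
  from Z0_cases[OF p] show ?thesis
  proof (elim disjE exE conjE)
    assume p0: "p = 0"
    show ?thesis
    proof (intro bexI[OF _ Xf_ker[OF k]] ballI)
      fix p' assume p': "p' \<in> Z0 k"
      show "vec (6*k) (F gX) $ p' = (if p' = p then 1 else 0)" unfolding ev[OF p']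
        by (rule Z0_F[OF p']) (use p0 eq6[of 1 5 _ 0] eq6[of 3 5 _ 0] in \<open>auto simp: gX_def\<close>)
    qed
  next
    assume p0: "p = 5"
    show ?thesis
    proof (intro bexI[OF _ Yf_ker[OF k]] ballI)
      fix p' assume p': "p' \<in> Z0 k"
      show "vec (6*k) (F gY) $ p' = (if p' = p then 1 else 0)" unfolding ev[OF p']
        by (rule Z0_F[OF p']) (use p0 eq6[of 1 5 _ 0] eq6[of 3 5 _ 0] in \<open>auto simp: gY_def\<close>)
    qed
  next
    fix J assume J: "J < k" and p0: "p = 6*J+1"
    show ?thesis
    proof (intro bexI[OF _ uf_ker[OF k]] ballI)
      fix p' assume p': "p' \<in> Z0 k"
      show "vec (6*k) (F (gu J)) $ p' = (if p' = p then 1 else 0)" unfolding ev[OF p']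
        by (rule Z0_F[OF p']) (use p0 eq6[of 1 1 _ J] eq6[of 3 1 _ J] eq6[of 5 1 0 J] in \<open>auto simp: gu_def\<close>)
    qed
  next
    fix J assume J: "J < k" and p0: "p = 6*J+3"
    show ?thesis
    proof (intro bexI[OF _ vf_ker[OF k]] ballI)
      fix p' assume p': "p' \<in> Z0 k"
      show "vec (6*k) (F (gv J)) $ p' = (if p' = p then 1 else 0)" unfolding ev[OF p']
        by (rule Z0_F[OF p']) (use p0 eq6[of 3 3 _ J] eq6[of 1 3 _ J] eq6[of 5 3 0 J] in \<open>auto simp: gv_def\<close>)
    qed
  qed
qed

lemma Aadj_dim: assumes k: "k \<ge> 1" shows "2*k+2 \<le> kernel_dim (Aadj k)"
proof -
  have Ac: "Aadj k \<in> carrier_mat (6*k) (6*k)" by (simp add: Aadj_def)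
  interpret kernel "6*k" "6*k" "Aadj k" by unfold_locales (rule Ac)
  have "card (Z0 k) \<le> dim"
  proof (rule dim_ge_set)
    show "finite (Z0 k)" by (simp add: Z0_def)
    show "Z0 k \<subseteq> {..<6*k}" using Z0_lt[OF k] by auto
    show "\<And>p. p \<in> Z0 k \<Longrightarrow> \<exists>w\<in>mat_kernel (Aadj k). \<forall>p'\<in>Z0 k. w $ p' = (if p' = p then 1 else 0)"
      by (rule Z0_wit[OF k])
  qed
  then show ?thesis using Ac Z0_card by simp
qed

theorem mainTheorem10:
  fixes k :: nat
  assumes "k \<ge> 3"
  shows "zero_forcing_number (6 * k) (G_adj k) = 6 * k div 3 + 2 \<and>
         max_nullity (6 * k) (G_adj k) = 6 * k div 3 + 2"
proof -
  have k: "k \<ge> 1" using assms by simp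
  have e: "6 * k div 3 + 2 = 2*k+2" by simp
  have zfs: "zero_forcing_set (6*k) (G_adj k) (Z0 k)" by (rule Z0_zfs[OF k])
  have ad: "2*k+2 \<le> kernel_dim (Aadj k)" by (rule Aadj_dim[OF k])
  let ?C = "card ` {Z. zero_forcing_set (6*k) (G_adj k) Z}"
  have finC: "finite ?C"
  proof (rule finite_subset)
    show "?C \<subseteq> {..6*k}"
    proof
      fix c assume "c \<in> ?C"
      then obtain Z where Z: "zero_forcing_set (6*k) (G_adj k) Z" "c = card Z" by blast
      have "Z \<subseteq> {..<6*k}" using Z(1) unfolding zero_forcing_set_def by simp
      then have "card Z \<le> card {..<6*k}" by (rule card_mono[rotated]) simp
      then show "c \<in> {..6*k}" using Z by simp
    qed
  qed simp
  have z1: "zero_forcing_number (6*k) (G_adj k) \<le> 2*k+2"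
  proof -
    have "card (Z0 k) \<in> ?C" using zfs by blast
    then have "Min ?C \<le> card (Z0 k)" by (rule Min_le[OF finC])
    then show ?thesis unfolding zero_forcing_number_def Z0_card .
  qed
  have z2: "2*k+2 \<le> zero_forcing_number (6*k) (G_adj k)"
  proof -
    have "?C \<noteq> {}" using zfs by blast
    from Min_in[OF finC this] obtain Z where Z: "zero_forcing_set (6*k) (G_adj k) Z"
      "Min ?C = card Z" by auto
    have "kernel_dim (Aadj k) \<le> card Z" by (rule zf_bound[OF Aadj_S Z(1)])
    then show ?thesis using ad Z(2) unfolding zero_forcing_number_def by simp
  qed
  let ?K = "kernel_dim ` S_graph (6*k) (G_adj k)"
  have Kb: "\<And>c. c \<in> ?K \<Longrightarrow> c \<le> 2*k+2"
  proof -
    fix c assume "c \<in> ?K"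
    then obtain A where A: "A \<in> S_graph (6*k) (G_adj k)" "c = kernel_dim A" by blast
    show "c \<le> 2*k+2" using zf_bound[OF A(1) zfs] A(2) Z0_card by simp
  qed
  have finK: "finite ?K" by (rule finite_subset[of _ "{..2*k+2}"]) (use Kb in auto)
  have m1: "max_nullity (6*k) (G_adj k) \<le> 2*k+2"
    unfolding max_nullity_def using Kb finK Aadj_S by (subst Max_le_iff) auto
  have m2: "2*k+2 \<le> max_nullity (6*k) (G_adj k)"
    unfolding max_nullity_def using Max_ge[OF finK, of "kernel_dim (Aadj k)"] Aadj_S ad by auto
  show ?thesis unfolding e using z1 z2 m1 m2 by simp
qed

end
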